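(* Let $1\le p\le\infty$, let $X$ be a real Banach space and let $U$ be an open convex subset of $X$. Suppose that for every real Banach space $Y$ and every mapping $f\in C^{1u}(U,Y)$ such that $f'$ takes $U$-bounded subsets of $U$ into $p$-$(DPL)$ subsets of $L(X,Y)$, it follows that $f':U\to L(X,Y)$ is compact and $f'(x)\in K(X,Y)$ for all $x\in U$. Then $X^*$ has the Schur property.
   Context: $C^{1u}(U,Y)$ is the space of (Fréchet) differentiable mappings $f:U\to Y$ whose derivative $f':U\to L(X,Y)$ is uniformly continuous on $U$-bounded subsets of $U$. A subset $B\subset U$ is $U$-bounded if it is bounded and its distance to the boundary of $U$ is strictly positive. A mapping $h:U\to E$ is compact if it takes $U$-bounded subsets of $U$ into relatively compact subsets of $E$. $K(X,Y)$ is the space of compact operators. A sequence $(x_n)$ in $X$ is weakly $p$-summable if $(x^*(x_n))_n\in\ell_p$ for every $x^*\in X^*$ (for $p=\infty$: weakly null). A bounded set in $X$ is Dunford-Pettis if every weakly null sequence in $X^*$ converges to $0$ uniformly on it. A $p$-Right null sequence is a weakly $p$-summable sequence whose set of terms is a Dunford-Pettis set. A set $K\subset L(X,Y)$ is a $p$-$(DPL)$ set if $\lim_n\sup_{T\in K}\|T(x_n)\|=0$ for every $p$-Right null sequence $(x_n)$ in $X$. A Banach space has the Schur property if every weakly null sequence in it is norm null. *)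

theory Defs
  imports "HOL-Analysis.Analysis"
begin

definition weakly_null :: "(nat \<Rightarrow> 'v::real_normed_vector) \<Rightarrow> bool" where
  "weakly_null x \<longleftrightarrow> (\<forall>\<phi>::'v \<Rightarrow>\<^sub>L real. (\<lambda>n. blinfun_apply \<phi> (x n)) \<longlonglongrightarrow> 0)"

definition weakly_p_summable :: "ereal \<Rightarrow> (nat \<Rightarrow> 'v::real_normed_vector) \<Rightarrow> bool" where
  "weakly_p_summable p x \<longleftrightarrow>
     (if p = \<infinity> then weakly_null x
      else (\<forall>\<phi>::'v \<Rightarrow>\<^sub>L real. summable (\<lambda>n. \<bar>blinfun_apply \<phi> (x n)\<bar> powr real_of_ereal p)))"

definition dunford_pettis_set :: "'v::real_normed_vector set \<Rightarrow> bool" where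
  "dunford_pettis_set B \<longleftrightarrow> bounded B \<and>
     (\<forall>\<psi>::nat \<Rightarrow> ('v \<Rightarrow>\<^sub>L real). weakly_null \<psi> \<longrightarrow>
        (\<forall>e>0. eventually (\<lambda>n. \<forall>x\<in>B. \<bar>blinfun_apply (\<psi> n) x\<bar> < e) sequentially))"

definition p_right_null :: "ereal \<Rightarrow> (nat \<Rightarrow> 'v::real_normed_vector) \<Rightarrow> bool" where
  "p_right_null p x \<longleftrightarrow> weakly_p_summable p x \<and> dunford_pettis_set (range x)"

definition p_DPL_set :: "ereal \<Rightarrow> ('a::real_normed_vector \<Rightarrow>\<^sub>L 'b::real_normed_vector) set \<Rightarrow> bool" where
  "p_DPL_set p K \<longleftrightarrow> (\<forall>x. p_right_null p x \<longrightarrow>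
     (\<forall>e>0. eventually (\<lambda>n. \<forall>T\<in>K. norm (blinfun_apply T (x n)) < e) sequentially))"

definition U_bounded :: "'a::real_normed_vector set \<Rightarrow> 'a set \<Rightarrow> bool" where
  "U_bounded U B \<longleftrightarrow> B \<subseteq> U \<and> bounded B \<and>
     (\<exists>\<delta>>0. \<forall>b\<in>B. \<forall>z\<in>frontier U. \<delta> \<le> dist b z)"

definition C1u :: "'a::real_normed_vector set \<Rightarrow> ('a \<Rightarrow> 'b::real_normed_vector) \<Rightarrow> ('a \<Rightarrow> ('a \<Rightarrow>\<^sub>L 'b)) \<Rightarrow> bool" where
  "C1u U f f' \<longleftrightarrow> (\<forall>x\<in>U. (f has_derivative blinfun_apply (f' x)) (at x)) \<and>
     (\<forall>B. U_bounded U B \<longrightarrow> uniformly_continuous_on B f')"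

definition compact_map :: "'a::real_normed_vector set \<Rightarrow> ('a \<Rightarrow> 'e::metric_space) \<Rightarrow> bool" where
  "compact_map U h \<longleftrightarrow> (\<forall>B. U_bounded U B \<longrightarrow> compact (closure (h ` B)))"

definition compact_operator :: "('a::real_normed_vector \<Rightarrow>\<^sub>L 'b::real_normed_vector) \<Rightarrow> bool" where
  "compact_operator T \<longleftrightarrow> compact (closure (blinfun_apply T ` cball 0 1))"

definition schur_property :: "'v::real_normed_vector itself \<Rightarrow> bool" where
  "schur_property _ \<longleftrightarrow> (\<forall>x::nat \<Rightarrow> 'v. weakly_null x \<longrightarrow> x \<longlonglongrightarrow> 0)"

end

theory Submission
  imports Defs
begin

lemma nat_cont: "continuous_on (UNIV::nat set) (f::nat \<Rightarrow> real)"
  by (simp add: continuous_on_discrete)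

theorem proposition3p12:
  fixes p :: ereal and U :: "'a::banach set"
  assumes "1 \<le> p"
    and "open U" and "convex U" and "U \<noteq> {}"
    and "\<forall>Y::(nat \<Rightarrow>\<^sub>C real) set. closed Y \<and> subspace Y \<longrightarrow>
           (\<forall>(f::'a \<Rightarrow> (nat \<Rightarrow>\<^sub>C real)) f'.
              f ` U \<subseteq> Y \<and> C1u U f f' \<and> (\<forall>B. U_bounded U B \<longrightarrow> p_DPL_set p (f' ` B))
              \<longrightarrow> compact_map U f' \<and> (\<forall>x\<in>U. compact_operator (f' x)))"
  shows "schur_property TYPE('a \<Rightarrow>\<^sub>L real)"
proof (rule ccontr)
  assume "\<not> schur_property TYPE('a \<Rightarrow>\<^sub>L real)"
  then obtain x :: "nat \<Rightarrow> ('a \<Rightarrow>\<^sub>L real)" where wx: "weakly_null x" and nx: "\<not> x \<longlonglongrightarrow> 0"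
    by (auto simp: schur_property_def)
  from nx obtain \<epsilon> where \<epsilon>: "\<epsilon> > 0" and freq: "\<forall>N. \<exists>n\<ge>N. norm (x n) \<ge> \<epsilon>"
    unfolding LIMSEQ_iff by (auto simp: not_less)
  define y where "y n = (if norm (x n) \<ge> \<epsilon> then x n /\<^sub>R norm (x n) else 0)" for n
  have ny: "norm (y n) \<le> 1" for n
    using \<epsilon> by (auto simp: y_def field_simps)
  have ny1: "norm (x n) \<ge> \<epsilon> \<Longrightarrow> norm (y n) = 1" for n
    using \<epsilon> by (auto simp: y_def field_simps)
  have wy: "(\<lambda>n. blinfun_apply \<phi> (y n)) \<longlonglongrightarrow> 0" for \<phi> :: "('a \<Rightarrow>\<^sub>L real) \<Rightarrow>\<^sub>L real"
  proof (rule Lim_null_comparison)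
    have "(\<lambda>n. blinfun_apply \<phi> (x n)) \<longlonglongrightarrow> 0" using wx by (simp add: weakly_null_def)
    then show "(\<lambda>n. \<bar>blinfun_apply \<phi> (x n)\<bar> / \<epsilon>) \<longlonglongrightarrow> 0"
      using tendsto_divide_zero[OF tendsto_rabs_zero[OF \<open>(\<lambda>n. blinfun_apply \<phi> (x n)) \<longlonglongrightarrow> 0\<close>], of \<epsilon>] by simp
    show "\<forall>\<^sub>F n in sequentially. norm (blinfun_apply \<phi> (y n)) \<le> \<bar>blinfun_apply \<phi> (x n)\<bar> / \<epsilon>"
    proof (intro always_eventually allI)
      fix n
      show "norm (blinfun_apply \<phi> (y n)) \<le> \<bar>blinfun_apply \<phi> (x n)\<bar> / \<epsilon>"
      proof (cases "norm (x n) \<ge> \<epsilon>")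
        case True
        then have "norm (blinfun_apply \<phi> (y n)) = \<bar>blinfun_apply \<phi> (x n)\<bar> / norm (x n)"
          using \<epsilon> by (simp add: y_def blinfun.scaleR_right divide_inverse_commute abs_mult)
        also have "\<dots> \<le> \<bar>blinfun_apply \<phi> (x n)\<bar> / \<epsilon>"
          using True \<epsilon> by (intro divide_left_mono) (auto intro!: mult_pos_pos)
        finally show ?thesis .
      qed (use \<epsilon> in \<open>simp add: y_def\<close>)
    qed
  qed
  have wy': "weakly_null y" using wy by (simp add: weakly_null_def)
  have pt: "(\<lambda>n. blinfun_apply (y n) v) \<longlonglongrightarrow> 0" for v
    using wy[of "Blinfun (\<lambda>f. blinfun_apply f v)"]
    by (simp add: bounded_linear_Blinfun_apply)
  have yb: "\<bar>blinfun_apply (y n) v\<bar> \<le> norm v" for n v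
  proof -
    have "\<bar>blinfun_apply (y n) v\<bar> \<le> norm (y n) * norm v"
      using norm_blinfun[of "y n" v] by simp
    also have "\<dots> \<le> 1 * norm v" by (intro mult_right_mono ny) auto
    finally show ?thesis by simp
  qed
  define Tf where "Tf v = Bcontfun (\<lambda>n. blinfun_apply (y n) v)" for v
  have mem: "(\<lambda>n. blinfun_apply (y n) v) \<in> bcontfun" for v
    by (rule bcontfun_normI[OF nat_cont, of _ "norm v"]) (simp add: yb)
  have Tfa: "apply_bcontfun (Tf v) n = blinfun_apply (y n) v" for v n
    by (simp add: Tf_def Bcontfun_inverse[OF mem])
  have nTf: "norm (Tf v) \<le> norm v" for v
    by (rule norm_bound) (simp add: Tfa yb)
  have lin: "bounded_linear Tf"
  proof (rule bounded_linear_intro[where K=1])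
    show "Tf (a + b) = Tf a + Tf b" for a b
      by (rule bcontfun_eqI) (simp add: Tfa blinfun.add_right)
    show "Tf (r *\<^sub>R a) = r *\<^sub>R Tf a" for r a
      by (rule bcontfun_eqI) (simp add: Tfa blinfun.scaleR_right)
    show "norm (Tf a) \<le> norm a * 1" for a using nTf by simp
  qed
  define T where "T = Blinfun Tf"
  have TT: "blinfun_apply T = Tf" unfolding T_def by (rule bounded_linear_Blinfun_apply[OF lin])
  have C1: "C1u U (blinfun_apply T) (\<lambda>_. T)"
    unfolding C1u_def
    by (auto intro!: bounded_linear_imp_has_derivative blinfun.bounded_linear_right uniformly_continuous_on_const)
  have wn: "(\<lambda>k. blinfun_apply \<phi> (x' k)) \<longlonglongrightarrow> 0"
    if "weakly_p_summable p x'" for \<phi> :: "'a \<Rightarrow>\<^sub>L real" and x'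
  proof (cases "p = \<infinity>")
    case True then show ?thesis using that by (simp add: weakly_p_summable_def weakly_null_def)
  next
    case False
    define r where "r = real_of_ereal p"
    have r1: "r \<ge> 1" using assms(1) False unfolding r_def
      by (cases p) auto
    have s: "summable (\<lambda>k. \<bar>blinfun_apply \<phi> (x' k)\<bar> powr r)"
      using that False by (simp add: weakly_p_summable_def r_def)
    have "(\<lambda>k. (\<bar>blinfun_apply \<phi> (x' k)\<bar> powr r) powr (1/r)) \<longlonglongrightarrow> 0"
      by (rule tendsto_zero_powrI[OF summable_LIMSEQ_zero[OF s]]) (use r1 in auto)
    moreover have "(\<bar>blinfun_apply \<phi> (x' k)\<bar> powr r) powr (1/r) = \<bar>blinfun_apply \<phi> (x' k)\<bar>" for k
      using r1 by (simp add: powr_powr)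
    ultimately show ?thesis by (simp add: tendsto_rabs_zero_iff)
  qed
  have DPL: "p_DPL_set p ((\<lambda>_. T) ` B)" for B
    unfolding p_DPL_set_def
  proof (intro allI impI)
    fix x' :: "nat \<Rightarrow> 'a" and e :: real
    assume prn: "p_right_null p x'" and e: "e > 0"
    from prn have dp: "dunford_pettis_set (range x')" and ws: "weakly_p_summable p x'"
      by (auto simp: p_right_null_def)
    from dp wy' e have "eventually (\<lambda>n. \<forall>v\<in>range x'. \<bar>blinfun_apply (y n) v\<bar> < e/2) sequentially"
      unfolding dunford_pettis_set_def by (meson half_gt_zero)
    then obtain N where N: "\<And>n k. n \<ge> N \<Longrightarrow> \<bar>blinfun_apply (y n) (x' k)\<bar> < e/2"
      unfolding eventually_sequentially by blast
    have "\<forall>n\<in>{..<N}. eventually (\<lambda>k. \<bar>blinfun_apply (y n) (x' k)\<bar> < e/2) sequentially"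
    proof
      fix n
      have "(\<lambda>k. blinfun_apply (y n) (x' k)) \<longlonglongrightarrow> 0" using wn[OF ws] .
      then show "eventually (\<lambda>k. \<bar>blinfun_apply (y n) (x' k)\<bar> < e/2) sequentially"
        using order_tendstoD(2)[OF tendsto_rabs_zero[OF \<open>(\<lambda>k. blinfun_apply (y n) (x' k)) \<longlonglongrightarrow> 0\<close>], of "e/2"] e by simp
    qed
    then have "eventually (\<lambda>k. \<forall>n\<in>{..<N}. \<bar>blinfun_apply (y n) (x' k)\<bar> < e/2) sequentially"
      by (intro eventually_ball_finite) auto
    then show "eventually (\<lambda>k. \<forall>S\<in>(\<lambda>_. T) ` B. norm (blinfun_apply S (x' k)) < e) sequentially"
    proof eventually_elim
      case (elim k)
      have "\<bar>blinfun_apply (y n) (x' k)\<bar> \<le> e/2" for n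
        using elim N[of n k] by (cases "n < N") (auto simp: not_less less_imp_le)
      then have "norm (Tf (x' k)) \<le> e/2" by (intro norm_bound) (simp add: Tfa)
      then show ?case using e by (auto simp: TT)
    qed
  qed
  have "compact_operator T"
    using assms(5)[rule_format, of UNIV "blinfun_apply T" "\<lambda>_. T"] C1 DPL assms(4)
    by auto
  then have K: "compact (closure (Tf ` cball 0 1))" by (simp add: compact_operator_def TT)
  obtain k where k: "finite k" "k \<subseteq> closure (Tf ` cball 0 1)"
    and kc: "closure (Tf ` cball 0 1) \<subseteq> (\<Union>c\<in>k. ball c (1/8))"
    using seq_compact_imp_totally_bounded[OF compact_imp_seq_compact[OF K], rule_format, of "1/8"] by auto
  have "\<forall>c\<in>k. \<exists>v\<in>cball 0 1. dist (Tf v) c < 1/8"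
  proof
    fix c assume "c \<in> k"
    then have "c \<in> closure (Tf ` cball 0 1)" using k(2) by blast
    then have "\<exists>w\<in>Tf ` cball 0 1. dist w c < 1/8" unfolding closure_approachable by (meson divide_pos_pos zero_less_numeral zero_less_one)
    then show "\<exists>v\<in>cball 0 1. dist (Tf v) c < 1/8" by blast
  qed
  then obtain g where g: "\<And>c. c \<in> k \<Longrightarrow> g c \<in> cball 0 1 \<and> dist (Tf (g c)) c < 1/8"
    by metis
  have "\<forall>c\<in>k. eventually (\<lambda>n. \<bar>blinfun_apply (y n) (g c)\<bar> < 1/4) sequentially"
  proof
    fix c
    show "eventually (\<lambda>n. \<bar>blinfun_apply (y n) (g c)\<bar> < 1/4) sequentially"
      using order_tendstoD(2)[OF tendsto_rabs_zero[OF pt[of "g c"]], of "1/4"] by simp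
  qed
  then have "eventually (\<lambda>n. \<forall>c\<in>k. \<bar>blinfun_apply (y n) (g c)\<bar> < 1/4) sequentially"
    by (intro eventually_ball_finite k(1))
  then obtain N where N: "\<And>n c. n \<ge> N \<Longrightarrow> c \<in> k \<Longrightarrow> \<bar>blinfun_apply (y n) (g c)\<bar> < 1/4"
    unfolding eventually_sequentially by blast
  have small: "\<bar>blinfun_apply (y n) v\<bar> \<le> 1/2" if "n \<ge> N" "v \<in> cball 0 1" for n v
  proof -
    have "Tf v \<in> Tf ` cball 0 1" using that(2) by (rule imageI)
    with closure_subset have "Tf v \<in> closure (Tf ` cball 0 1)" by (rule subsetD)
    then have "Tf v \<in> (\<Union>c\<in>k. ball c (1/8))" using kc by (rule subsetD[rotated])
    then obtain c where c: "c \<in> k" "dist c (Tf v) < 1/8" by (auto simp only: UN_iff mem_ball)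
    then have d: "dist (Tf v) (Tf (g c)) < 1/4" using g[OF c(1)]
      using dist_triangle[of "Tf v" "Tf (g c)" c] dist_commute[of c "Tf v"] dist_commute[of "Tf (g c)" c] by linarith
    have "\<bar>blinfun_apply (y n) v - blinfun_apply (y n) (g c)\<bar> = norm (apply_bcontfun (Tf v - Tf (g c)) n)"
      by (simp add: Tfa)
    also have "\<dots> \<le> norm (Tf v - Tf (g c))" by (rule norm_bounded)
    also have "\<dots> < 1/4" using d by (simp add: dist_norm)
    finally have "\<bar>blinfun_apply (y n) v - blinfun_apply (y n) (g c)\<bar> < 1/4" .
    then show ?thesis using N[OF that(1) c(1)] abs_triangle_ineq2[of "blinfun_apply (y n) v" "blinfun_apply (y n) (g c)"] by linarith
  qed
  obtain n where n: "n \<ge> N" "norm (x n) \<ge> \<epsilon>" using freq by blast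
  have "norm (y n) \<le> 1/2"
  proof (rule norm_blinfun_bound)
    fix v :: 'a
    show "norm (blinfun_apply (y n) v) \<le> 1/2 * norm v"
    proof (cases "v = 0")
      case False
      have nv: "norm v > 0" using False by simp
      have "norm (v /\<^sub>R norm v) = 1" using nv by simp
      then have "v /\<^sub>R norm v \<in> cball 0 1" by (simp only: mem_cball_0 order_refl)
      then have h: "\<bar>blinfun_apply (y n) (v /\<^sub>R norm v)\<bar> \<le> 1/2" by (rule small[OF n(1)])
      have eq: "blinfun_apply (y n) (v /\<^sub>R norm v) = blinfun_apply (y n) v / norm v"
        by (simp add: blinfun.scaleR_right divide_inverse_commute)
      have "\<bar>blinfun_apply (y n) v\<bar> / norm v \<le> 1/2"
        using h unfolding eq abs_divide using nv by simp
      then show ?thesis using nv by (simp add: pos_divide_le_eq)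
    qed simp
  qed simp
  then show False using ny1[OF n(2)] by simp
qed

end
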